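(* Let $k$ be an algebraically closed field of characteristic $0$, $d\ge3$, $n\ge2$, and let $V_n$ have basis $v_1,\dots,v_n$ with symmetric $d$-linear form $\Theta_d(v_{i_1},\dots,v_{i_d})=1$ if $i_1+\dots+i_d=(d-1)n+1$ and $0$ otherwise. Let $\mathrm{Cent}_k(n,d)=\{f\in\mathrm{End}_k(V_n):\Theta_d(fu_1,u_2,\dots,u_d)=\Theta_d(u_1,fu_2,\dots,u_d)\ \forall u_i\}$ and $\mathcal{L}(n,d)=\{L\in\mathfrak{gl}(V_n):\sum_{i=1}^d\Theta_d(u_1,\dots,L(u_i),\dots,u_d)=0\ \forall u_j\}$. Then $\dim_k\mathcal{L}(n,d)<\dim_k\mathrm{Cent}_k(n,d)=n$. *)

theory Defs
  imports "HOL-Computational_Algebra.Polynomial" "HOL-Library.FuncSet" "HOL-Library.Function_Algebras"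
begin

definition alg_closed :: "'a::field itself \<Rightarrow> bool" where
  "alg_closed _ \<longleftrightarrow> (\<forall>p::'a poly. degree p > 0 \<longrightarrow> (\<exists>x. poly p x = 0))"

text \<open>Vectors of V_n: functions nat => k, coordinates w.r.t. v_1..v_n are the values at 1..n.
  A d-tuple (u_1,...,u_d) is a family U with U j = u_j for j in 1..d.\<close>
definition Theta :: "nat \<Rightarrow> nat \<Rightarrow> (nat \<Rightarrow> nat \<Rightarrow> 'a::field) \<Rightarrow> 'a" where
  "Theta n d U = (\<Sum>ix \<in> Pi\<^sub>E {1..d} (\<lambda>_. {1..n}).
      (if (\<Sum>j=1..d. ix j) = (d - 1) * n + 1 then (\<Prod>j=1..d. U j (ix j)) else 0))"

text \<open>Endomorphisms of V_n as n x n matrices (entries indexed by 1..n, zero elsewhere).\<close>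
definition mats :: "nat \<Rightarrow> (nat \<Rightarrow> nat \<Rightarrow> 'a::field) set" where
  "mats n = {f. \<forall>i j. (i \<notin> {1..n} \<or> j \<notin> {1..n}) \<longrightarrow> f i j = 0}"

definition mat_app :: "nat \<Rightarrow> (nat \<Rightarrow> nat \<Rightarrow> 'a::field) \<Rightarrow> (nat \<Rightarrow> 'a) \<Rightarrow> (nat \<Rightarrow> 'a)" where
  "mat_app n f u = (\<lambda>i. \<Sum>j=1..n. f i j * u j)"

definition mscale :: "'a::field \<Rightarrow> (nat \<Rightarrow> nat \<Rightarrow> 'a) \<Rightarrow> (nat \<Rightarrow> nat \<Rightarrow> 'a)" where
  "mscale c f = (\<lambda>i j. c * f i j)"

definition Cent :: "nat \<Rightarrow> nat \<Rightarrow> (nat \<Rightarrow> nat \<Rightarrow> 'a::field) set" where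
  "Cent n d = {f \<in> mats n. \<forall>U. Theta n d (U(1 := mat_app n f (U 1))) = Theta n d (U(2 := mat_app n f (U 2)))}"

definition Lie :: "nat \<Rightarrow> nat \<Rightarrow> (nat \<Rightarrow> nat \<Rightarrow> 'a::field) set" where
  "Lie n d = {L \<in> mats n. \<forall>U. (\<Sum>i=1..d. Theta n d (U(i := mat_app n L (U i)))) = 0}"

end

theory Submission
  imports Defs
begin

lemma vs_mscale: "vector_space (mscale :: 'a::field \<Rightarrow> (nat \<Rightarrow> nat \<Rightarrow> 'a) \<Rightarrow> _)"
  by unfold_locales (auto simp: mscale_def fun_eq_iff algebra_simps)

interpretation VS: vector_space "mscale :: 'a::field \<Rightarrow> (nat \<Rightarrow> nat \<Rightarrow> 'a) \<Rightarrow> _"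
  by (rule vs_mscale)

definition ev :: "nat \<Rightarrow> nat \<Rightarrow> 'a::field" where
  "ev t = (\<lambda>m. if m = t then 1 else 0)"

lemma mat_app_ev: "t \<in> {1..n} \<Longrightarrow> mat_app n f (ev t) = (\<lambda>i. f i t)"
proof -
  assume t: "t \<in> {1..n}"
  have "\<And>i. (\<Sum>j=1..n. f i j * ev t j) = (\<Sum>j=1..n. if j = t then f i t else 0)"
    by (rule sum.cong) (auto simp: ev_def)
  then show ?thesis using t by (simp add: mat_app_def fun_eq_iff)
qed

lemma sum_remove_nat: "i \<in> {1..d} \<Longrightarrow> (\<Sum>k=1..d. g k) = g i + (\<Sum>k\<in>{1..d}-{i}. g k)"
  for g :: "nat \<Rightarrow> 'b::comm_monoid_add"
  by (simp add: sum.remove)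

lemma sum_remove_nat_prod: "i \<in> {1..d} \<Longrightarrow> (\<Prod>k=1..d. g k) = g i * (\<Prod>k\<in>{1..d}-{i}. g k)"
  for g :: "nat \<Rightarrow> 'b::comm_monoid_mult"
  by (simp add: prod.remove)

lemma theta_basis:
  fixes v :: "nat \<Rightarrow> 'a::field"
  assumes i: "i \<in> {1..d}" and a: "\<forall>k\<in>{1..d}. a k \<in> {1..n}" and v: "\<forall>m>n. v m = 0"
  shows "Theta n d ((\<lambda>k. ev (a k))(i := v)) = v ((d-1)*n+1 + a i - (\<Sum>k=1..d. a k))"
proof -
  define N where "N = (d-1)*n+1"
  define R where "R = (\<Sum>k\<in>{1..d}-{i}. a k)"
  define t0 where "t0 = N - R"
  define P where "P = Pi\<^sub>E {1..d} (\<lambda>_. {1..n::nat})"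
  define U where "U = (\<lambda>k. ev (a k))(i := v)"
  define ix0 where "ix0 = (\<lambda>k. if k \<in> {1..d} then (if k = i then t0 else a k) else undefined)"
  have cardD: "card ({1..d}-{i}) = d - 1" using i by simp
  have R: "R \<le> (d-1)*n"
    unfolding R_def using a cardD sum_bounded_above[of "{1..d}-{i}" a n] by auto
  have RN: "R < N" using R by (simp add: N_def)
  have S: "(\<Sum>k=1..d. a k) = a i + R" unfolding R_def by (rule sum_remove_nat[OF i])
  have t0eq: "N + a i - (\<Sum>k=1..d. a k) = t0" using S RN by (simp add: t0_def)
  have summand: "(if (\<Sum>j=1..d. ix j) = N then (\<Prod>j=1..d. U j (ix j)) else 0)
        = (if ix = ix0 then v t0 else 0)" if ix: "ix \<in> P" for ix
  proof -
    have prod: "(\<Prod>j=1..d. U j (ix j)) = v (ix i) * (\<Prod>j\<in>{1..d}-{i}. ev (a j) (ix j))"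
      using sum_remove_nat[OF i] i by (simp add: U_def prod.remove)
    have sumix: "(\<Sum>j=1..d. ix j) = ix i + (\<Sum>j\<in>{1..d}-{i}. ix j)"
      by (rule sum_remove_nat[OF i])
    show ?thesis
    proof (cases "\<forall>j\<in>{1..d}-{i}. ix j = a j")
      case True
      have p1: "(\<Prod>j\<in>{1..d}-{i}. ev (a j) (ix j)) = (1::'a)"
        using True by (intro prod.neutral) (simp add: ev_def)
      have s1: "(\<Sum>j\<in>{1..d}-{i}. ix j) = R" unfolding R_def using True by (intro sum.cong) auto
      have eqv: "ix = ix0 \<longleftrightarrow> ix i = t0"
      proof
        assume "ix i = t0" then show "ix = ix0"
          using True ix unfolding ix0_def P_def by (auto simp: fun_eq_iff PiE_def extensional_def)
      next
        assume "ix = ix0" then show "ix i = t0" using i by (simp add: ix0_def)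
      qed
      show ?thesis using prod p1 sumix s1 eqv RN by (auto simp: t0_def)
    next
      case False
      then obtain j where j: "j \<in> {1..d}-{i}" "ix j \<noteq> a j" by blast
      have "(\<Prod>j\<in>{1..d}-{i}. ev (a j) (ix j)) = (0::'a)"
        using j by (intro prod_zero) (auto simp: ev_def)
      moreover have "ix \<noteq> ix0" using j by (auto simp: ix0_def)
      ultimately show ?thesis using prod by simp
    qed
  qed
  have "Theta n d U = (\<Sum>ix\<in>P. if ix = ix0 then v t0 else 0)"
    unfolding Theta_def P_def[symmetric] N_def[symmetric] by (rule sum.cong[OF refl summand])
  also have "\<dots> = (if ix0 \<in> P then v t0 else 0)"
    by (rule sum.delta) (simp add: P_def finite_PiE)
  also have "\<dots> = v t0"
  proof (cases "ix0 \<in> P")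
    case False
    have "t0 \<ge> 1" using RN by (simp add: t0_def)
    moreover have "\<not> (t0 \<ge> 1 \<and> t0 \<le> n)"
    proof
      assume "t0 \<ge> 1 \<and> t0 \<le> n"
      then have "ix0 \<in> P" using a unfolding P_def ix0_def by (auto simp: PiE_def extensional_def)
      with False show False by simp
    qed
    ultimately show ?thesis using v False by auto
  qed simp
  finally show ?thesis using t0eq by (simp add: U_def N_def)
qed

definition Tk :: "nat \<Rightarrow> nat \<Rightarrow> nat \<Rightarrow> nat \<Rightarrow> 'a::field" where
  "Tk n k = (\<lambda>i j. if i \<in> {1..n} \<and> j \<in> {1..n} \<and> j = i + k then 1 else 0)"

lemma mat_app_Tk:
  "mat_app n (Tk n k) u = (\<lambda>i. if i \<in> {1..n} \<and> i + k \<le> n then u (i+k) else 0)"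
proof -
  have "\<And>i. (\<Sum>j=1..n. Tk n k i j * u j) = (\<Sum>j\<in>{1..n}. if j = i + k then (if i \<in> {1..n} then u j else 0) else 0)"
    by (rule sum.cong) (auto simp: Tk_def)
  then show ?thesis by (auto simp: mat_app_def fun_eq_iff sum.delta)
qed

lemma sum_le_PiE:
  assumes "ix \<in> Pi\<^sub>E {1..d} (\<lambda>_. {1..n::nat})" "i \<in> {1..d}"
  shows "(\<Sum>j\<in>{1..d}-{i}. ix j) \<le> (d-1)*n"
proof -
  have "card ({1..d}-{i}) = d - 1" using assms(2) by simp
  then show ?thesis using assms(1) sum_bounded_above[of "{1..d}-{i}" ix n] by (auto simp: PiE_def Pi_def)
qed

lemma theta_shift:
  fixes U :: "nat \<Rightarrow> nat \<Rightarrow> 'a::field"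
  assumes i: "i \<in> {1..d}"
  shows "Theta n d (U(i := mat_app n (Tk n k) (U i))) =
    (\<Sum>ix\<in>Pi\<^sub>E {1..d} (\<lambda>_. {1..n}). if (\<Sum>j=1..d. ix j) = (d-1)*n+1+k then (\<Prod>j=1..d. U j (ix j)) else 0)"
proof -
  define N where "N = (d-1)*n+1"
  define P where "P = Pi\<^sub>E {1..d} (\<lambda>_. {1..n::nat})"
  define w where "w = mat_app n (Tk n k) (U i)"
  define R where "R = (\<lambda>ix::nat\<Rightarrow>nat. \<Prod>j\<in>{1..d}-{i}. U j (ix j))"
  define Q where "Q = (\<lambda>ix::nat\<Rightarrow>nat. \<Sum>j\<in>{1..d}-{i}. ix j)"
  define S1 where "S1 = {ix\<in>P. ix i + Q ix = N \<and> ix i + k \<le> n}"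
  define S2 where "S2 = {ix\<in>P. ix i + Q ix = N + k}"
  have finP: "finite P" unfolding P_def by (simp add: finite_PiE)
  have sumr: "(\<Sum>j=1..d. ix j) = ix i + Q ix" for ix
    unfolding Q_def by (rule sum_remove_nat[OF i])
  have Qb: "Q ix \<le> (d-1)*n" if "ix \<in> P" for ix
    using sum_le_PiE[of ix d n i] that i by (simp add: Q_def P_def)
  have ixr: "ix i \<in> {1..n}" if "ix \<in> P" for ix using that i by (auto simp: P_def PiE_def Pi_def)
  have "Theta n d (U(i := w)) = (\<Sum>ix\<in>P. if ix i + Q ix = N then w (ix i) * R ix else 0)"
    unfolding Theta_def P_def[symmetric] N_def[symmetric]
  proof (rule sum.cong[OF refl])
    fix ix :: "nat \<Rightarrow> nat"
    have "(\<Prod>j=1..d. (U(i := w)) j (ix j)) = (U(i := w)) i (ix i) * (\<Prod>j\<in>{1..d}-{i}. (U(i := w)) j (ix j))"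
      by (rule sum_remove_nat_prod[OF i])
    also have "(\<Prod>j\<in>{1..d}-{i}. (U(i := w)) j (ix j)) = R ix" unfolding R_def by (rule prod.cong) auto
    hence "(U(i := w)) i (ix i) * (\<Prod>j\<in>{1..d}-{i}. (U(i := w)) j (ix j)) = w (ix i) * R ix" by simp
    finally show "(if (\<Sum>j=1..d. ix j) = N then (\<Prod>j=1..d. (U(i := w)) j (ix j)) else 0) =
      (if ix i + Q ix = N then w (ix i) * R ix else 0)" using sumr[of ix] by simp
  qed
  also have "\<dots> = (\<Sum>ix\<in>P. if ix i + Q ix = N \<and> ix i + k \<le> n then U i (ix i + k) * R ix else 0)"
    by (rule sum.cong[OF refl]) (use ixr in \<open>auto simp: w_def mat_app_Tk\<close>)
  also have "\<dots> = (\<Sum>ix\<in>S1. U i (ix i + k) * R ix)"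
    unfolding S1_def by (rule sum.inter_filter[symmetric, OF finP])
  also have "\<dots> = (\<Sum>ix\<in>S2. U i (ix i) * R ix)"
  proof (rule sum.reindex_bij_witness[where j = "\<lambda>ix. ix(i := ix i + k)" and i = "\<lambda>ix. ix(i := ix i - k)"])
    fix a assume a: "a \<in> S1"
    show "(a(i := a i + k))(i := (a(i := a i + k)) i - k) = a" by simp
    have Qa: "Q (a(i := a i + k)) = Q a" unfolding Q_def by (rule sum.cong) auto
    have Ra: "R (a(i := a i + k)) = R a" unfolding R_def by (rule prod.cong) auto
    show "a(i := a i + k) \<in> S2" using a i ixr[of a] Qa
      by (auto simp: S1_def S2_def P_def PiE_def Pi_def extensional_def)
    show "U i ((a(i := a i + k)) i) * R (a(i := a i + k)) = U i (a i + k) * R a" using Ra by simp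
  next
    fix b assume b: "b \<in> S2"
    have bP: "b \<in> P" using b by (simp add: S2_def)
    have ge: "b i \<ge> k + 1" using b Qb[OF bP] by (auto simp: S2_def N_def)
    show "(b(i := b i - k))(i := (b(i := b i - k)) i + k) = b" using ge by (simp add: fun_eq_iff)
    have Qb': "Q (b(i := b i - k)) = Q b" unfolding Q_def by (rule sum.cong) auto
    show "b(i := b i - k) \<in> S1" using b i ixr[OF bP] Qb' ge
      by (auto simp: S1_def S2_def P_def PiE_def Pi_def extensional_def)
  qed
  also have "\<dots> = (\<Sum>ix\<in>P. if ix i + Q ix = N + k then U i (ix i) * R ix else 0)"
    unfolding S2_def by (rule sum.inter_filter[OF finP])
  also have "\<dots> = (\<Sum>ix\<in>P. if (\<Sum>j=1..d. ix j) = N + k then (\<Prod>j=1..d. U j (ix j)) else 0)"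
  proof (rule sum.cong[OF refl])
    fix ix :: "nat \<Rightarrow> nat"
    have "(\<Prod>j=1..d. U j (ix j)) = U i (ix i) * R ix"
      unfolding R_def by (rule sum_remove_nat_prod[OF i])
    then show "(if ix i + Q ix = N + k then U i (ix i) * R ix else 0) =
      (if (\<Sum>j=1..d. ix j) = N + k then (\<Prod>j=1..d. U j (ix j)) else 0)" using sumr[of ix] by simp
  qed
  finally show ?thesis by (simp add: w_def P_def N_def)
qed

lemma Tk_Cent:
  assumes "d \<ge> 2"
  shows "Tk n k \<in> Cent n d"
proof -
  have "Tk n k \<in> mats n" by (auto simp: mats_def Tk_def)
  moreover have "Theta n d (U(1 := mat_app n (Tk n k) (U 1))) = Theta n d (U(2 := mat_app n (Tk n k) (U 2)))"
    for U :: "nat \<Rightarrow> nat \<Rightarrow> 'a"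
    using assms by (simp add: theta_shift)
  ultimately show ?thesis by (simp add: Cent_def)
qed

lemma sum_fun_app: "(sum F K) i j = (\<Sum>k\<in>K. F k i j)"
  for F :: "'k \<Rightarrow> nat \<Rightarrow> nat \<Rightarrow> 'b::comm_monoid_add"
  by (induct K rule: infinite_finite_induct) auto

lemma sum_split3: "d \<ge> 3 \<Longrightarrow> (\<Sum>k=1..d. g k) = g 1 + g 2 + g 3 + (\<Sum>k=4..d. g k)"
  for g :: "nat \<Rightarrow> 'b::comm_monoid_add"
proof -
  assume d: "d \<ge> 3"
  have e: "Suc 1 = (2::nat)" "Suc 2 = (3::nat)" "Suc 3 = (4::nat)" by simp_all
  have "(\<Sum>k=1..d. g k) = g 1 + (\<Sum>k=Suc 1..d. g k)" using d by (intro sum.atLeast_Suc_atMost) simp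
  also have "(\<Sum>k=Suc 1..d. g k) = g 2 + (\<Sum>k=Suc 2..d. g k)" unfolding e by (rule sum.atLeast_Suc_atMost[of 2 d g, unfolded e]) (use d in simp)
  also have "(\<Sum>k=Suc 2..d. g k) = g 3 + (\<Sum>k=Suc 3..d. g k)" unfolding e by (rule sum.atLeast_Suc_atMost[of 3 d g, unfolded e]) (use d in simp)
  finally show ?thesis unfolding e by (simp only: add.assoc)
qed

definition tup :: "nat \<Rightarrow> nat \<Rightarrow> nat \<Rightarrow> nat \<Rightarrow> nat \<Rightarrow> nat" where
  "tup x y z w = (\<lambda>k. if k = 1 then x else if k = 2 then y else if k = 3 then z else w)"

lemma tup_sum: "d \<ge> 3 \<Longrightarrow> (\<Sum>k=1..d. tup x y z w k) = x + y + z + (d-3)*w"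
proof -
  assume d: "d \<ge> 3"
  have "(\<Sum>k=4..d. tup x y z w k) = (\<Sum>k=4..d. w)" by (rule sum.cong) (auto simp: tup_def)
  also have "\<dots> = (d-3)*w" by simp
  finally have e: "(\<Sum>k=4..d. tup x y z w k) = (d-3)*w" .
  have "tup x y z w 1 = x" "tup x y z w 2 = y" "tup x y z w 3 = z" by (auto simp: tup_def)
  then show ?thesis using sum_split3[OF d, of "tup x y z w"] e by simp
qed

lemma tup_range: "x \<in> {1..n} \<Longrightarrow> y \<in> {1..n} \<Longrightarrow> z \<in> {1..n} \<Longrightarrow> w \<in> {1..n} \<Longrightarrow>
   \<forall>k\<in>{1..d}. tup x y z w k \<in> {1..n}"
  by (simp add: tup_def)

lemma cent_rel:
  fixes f :: "nat \<Rightarrow> nat \<Rightarrow> 'a::field"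
  assumes f: "f \<in> Cent n d" and d: "d \<ge> 2" and a: "\<forall>k\<in>{1..d}. a k \<in> {1..n}"
  shows "f ((d-1)*n+1 + a 1 - (\<Sum>k=1..d. a k)) (a 1) = f ((d-1)*n+1 + a 2 - (\<Sum>k=1..d. a k)) (a 2)"
proof -
  define U where "U = (\<lambda>k. ev (a k) :: nat \<Rightarrow> 'a)"
  have fm: "f \<in> mats n" and eq: "Theta n d (U(1 := mat_app n f (U 1))) = Theta n d (U(2 := mat_app n f (U 2)))"
    using f by (auto simp: Cent_def)
  have a1: "a 1 \<in> {1..n}" and a2: "a 2 \<in> {1..n}" using a d by auto
  have v: "\<forall>m>n. f m t = 0" for t using fm by (auto simp: mats_def)
  have i1: "(1::nat) \<in> {1..d}" and i2: "(2::nat) \<in> {1..d}" using d by auto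
  show ?thesis
    using eq theta_basis[OF i1 a, of "\<lambda>m. f m (a 1)"] theta_basis[OF i2 a, of "\<lambda>m. f m (a 2)"] v
    unfolding U_def mat_app_ev[OF a1] mat_app_ev[OF a2] by simp
qed

lemma lie_rel:
  fixes L :: "nat \<Rightarrow> nat \<Rightarrow> 'a::field"
  assumes L: "L \<in> Lie n d" and a: "\<forall>k\<in>{1..d}. a k \<in> {1..n}"
  shows "(\<Sum>i=1..d. L ((d-1)*n+1 + a i - (\<Sum>k=1..d. a k)) (a i)) = 0"
proof -
  define U where "U = (\<lambda>k. ev (a k) :: nat \<Rightarrow> 'a)"
  have fm: "L \<in> mats n" and eq: "(\<Sum>i=1..d. Theta n d (U(i := mat_app n L (U i)))) = 0"
    using L by (auto simp: Lie_def)
  have v: "\<forall>m>n. L m t = 0" for t using fm by (auto simp: mats_def)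
  have "Theta n d (U(i := mat_app n L (U i))) = L ((d-1)*n+1 + a i - (\<Sum>k=1..d. a k)) (a i)"
    if i: "i \<in> {1..d}" for i
  proof -
    have ai: "a i \<in> {1..n}" using a i by auto
    show ?thesis unfolding U_def mat_app_ev[OF ai] using theta_basis[OF i a, of "\<lambda>m. L m (a i)"] v by simp
  qed
  then show ?thesis using eq by (metis (no_types, lifting) sum.cong)
qed

lemma cent_toeplitz:
  fixes f :: "nat \<Rightarrow> nat \<Rightarrow> 'a::field"
  assumes f: "f \<in> Cent n d" and d: "d \<ge> 3" and r: "r \<in> {1..n}" and j: "j \<in> {1..n}"
  shows "f r j = f (n + r - j) n"
proof -
  obtain m where m: "d = m + 3" using d by (metis add.commute le_iff_add)
  have "\<forall>k\<in>{1..d}. tup j n (n+1-r) n k \<in> {1..n}" using r j by (intro tup_range) auto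
  from cent_rel[OF f _ this] d
  have "f ((d-1)*n+1 + j - (j + n + (n+1-r) + (d-3)*n)) j = f ((d-1)*n+1 + n - (j + n + (n+1-r) + (d-3)*n)) n"
    unfolding tup_sum[OF d] by (simp add: tup_def)
  moreover have "(d-1)*n+1 + j - (j + n + (n+1-r) + (d-3)*n) = r" using r m by (simp add: algebra_simps)
  moreover have "(d-1)*n+1 + n - (j + n + (n+1-r) + (d-3)*n) = n + r - j" using r j m by (simp add: algebra_simps)
  ultimately show ?thesis by simp
qed

lemma cent_span:
  fixes f :: "nat \<Rightarrow> nat \<Rightarrow> 'a::field"
  assumes f: "f \<in> Cent n d" and d: "d \<ge> 3"
  shows "f = (\<Sum>k<n. mscale (f (n-k) n) (Tk n k))"
proof (rule ext, rule ext)
  fix i j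
  have fm: "f \<in> mats n" using f by (simp add: Cent_def)
  have "(\<Sum>k<n. mscale (f (n-k) n) (Tk n k)) i j = (\<Sum>k<n. f (n-k) n * Tk n k i j)"
    by (simp add: sum_fun_app mscale_def)
  also have "\<dots> = (\<Sum>k\<in>{..<n}. if k = j - i then (if i \<in> {1..n} \<and> j \<in> {1..n} \<and> i \<le> j then f (n-k) n else 0) else 0)"
    by (rule sum.cong) (auto simp: Tk_def)
  also have "\<dots> = (if j - i < n then (if i \<in> {1..n} \<and> j \<in> {1..n} \<and> i \<le> j then f (n-(j-i)) n else 0) else 0)"
    by (simp add: sum.delta)
  also have "\<dots> = f i j"
  proof (cases "i \<in> {1..n} \<and> j \<in> {1..n}")
    case True
    have t: "f i j = f (n + i - j) n" using cent_toeplitz[OF f d] True by auto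
    show ?thesis
    proof (cases "i \<le> j")
      case True2: True
      have "n - (j - i) = n + i - j" using True True2 by auto
      then show ?thesis using True True2 t by auto
    next
      case False
      have gt: "n + i - j \<notin> {1..n}" using False by auto
      from fm have "\<forall>a b. (a \<notin> {1..n} \<or> b \<notin> {1..n}) \<longrightarrow> f a b = 0" by (simp add: mats_def)
      then have "f (n + i - j) n = 0" using gt by blast
      then show ?thesis using False t by auto
    qed
  next
    case False
    then show ?thesis using fm by (auto simp: mats_def)
  qed
  finally show "f i j = (\<Sum>k<n. mscale (f (n-k) n) (Tk n k)) i j" by simp
qed

lemma Tk_inj: "n \<ge> 1 \<Longrightarrow> inj_on (Tk n :: nat \<Rightarrow> _ \<Rightarrow> _ \<Rightarrow> 'a::field) {..<n}"
proof (rule inj_onI)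
  fix k k' assume n: "n \<ge> 1" and k: "k \<in> {..<n}" and k': "k' \<in> {..<n}"
    and eq: "(Tk n k :: nat \<Rightarrow> nat \<Rightarrow> 'a) = Tk n k'"
  have "(Tk n k :: nat \<Rightarrow> nat \<Rightarrow> 'a) 1 (1+k) = Tk n k' 1 (1+k)" using eq by simp
  then show "k = k'" using n k by (auto simp: Tk_def split: if_splits)
qed

lemma Tk_indep:
  assumes n: "n \<ge> 1"
  shows "VS.independent (Tk n ` {..<n} :: (nat \<Rightarrow> nat \<Rightarrow> 'a::field) set)"
proof (rule VS.independent_if_scalars_zero)
  show "finite (Tk n ` {..<n} :: (nat \<Rightarrow> nat \<Rightarrow> 'a) set)" by simp
next
  fix g :: "(nat \<Rightarrow> nat \<Rightarrow> 'a) \<Rightarrow> 'a" and x :: "nat \<Rightarrow> nat \<Rightarrow> 'a"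
  assume s: "(\<Sum>x\<in>Tk n ` {..<n}. mscale (g x) x) = 0" and x: "x \<in> Tk n ` {..<n}"
  then obtain k where k: "k < n" and xk: "x = Tk n k" by auto
  have "0 = (\<Sum>x\<in>Tk n ` {..<n}. mscale (g x) x) 1 (1+k)" using s by simp
  also have "\<dots> = (\<Sum>k'\<in>{..<n}. g (Tk n k') * Tk n k' 1 (1+k))"
    by (simp add: sum_fun_app mscale_def sum.reindex[OF Tk_inj[OF n]])
  also have "\<dots> = (\<Sum>k'\<in>{..<n}. if k' = k then g (Tk n k') else 0)"
    by (rule sum.cong) (use k in \<open>auto simp: Tk_def\<close>)
  also have "\<dots> = g x" using k xk by (simp add: sum.delta)
  finally show "g x = 0" by simp
qed

lemma dim_Cent:
  assumes d: "d \<ge> 3" and n: "n \<ge> 1"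
  shows "VS.dim (Cent n d :: (nat \<Rightarrow> nat \<Rightarrow> 'a::field) set) = n"
proof -
  let ?B = "Tk n ` {..<n} :: (nat \<Rightarrow> nat \<Rightarrow> 'a) set"
  have B: "?B \<subseteq> Cent n d"
  proof
    fix x assume "x \<in> ?B"
    then obtain k where "x = Tk n k" by auto
    with Tk_Cent[of d n k] d show "x \<in> Cent n d" by simp
  qed
  have C: "Cent n d \<subseteq> VS.span ?B"
  proof
    fix f :: "nat \<Rightarrow> nat \<Rightarrow> 'a" assume f: "f \<in> Cent n d"
    have "(\<Sum>k<n. mscale (f (n-k) n) (Tk n k)) \<in> VS.span ?B"
      by (intro VS.span_sum VS.span_scale VS.span_base) auto
    then show "f \<in> VS.span ?B" using cent_span[OF f d] by simp
  qed
  have "VS.span ?B = VS.span (Cent n d)"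
    using VS.span_mono[OF B] VS.span_minimal[OF C VS.subspace_span] by auto
  then have "VS.dim (Cent n d :: (nat \<Rightarrow> nat \<Rightarrow> 'a) set) = card ?B" by (rule VS.dim_eq_card[OF _ Tk_indep[OF n]])
  also have "\<dots> = n" by (simp add: card_image[OF Tk_inj[OF n]])
  finally show ?thesis .
qed

definition Lie' :: "nat \<Rightarrow> nat \<Rightarrow> (nat \<Rightarrow> nat \<Rightarrow> 'a::field) set" where
  "Lie' n d = {L \<in> mats n. \<forall>a. (\<forall>k\<in>{1..d}. a k \<in> {1..n}) \<longrightarrow>
      (\<Sum>i=1..d. L ((d-1)*n+1 + a i - (\<Sum>k=1..d. a k)) (a i)) = 0}"

lemma Lie_sub: "Lie n d \<subseteq> Lie' n d"
  using lie_rel by (auto simp: Lie'_def Lie_def)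

lemma Lie'_subspace: "VS.subspace (Lie' n d :: (nat \<Rightarrow> nat \<Rightarrow> 'a::field) set)"
  unfolding VS.subspace_def
  by (auto simp: Lie'_def mats_def mscale_def sum.distrib sum_distrib_left[symmetric])

lemma lie_kernel:
  fixes L :: "nat \<Rightarrow> nat \<Rightarrow> 'a::field_char_0"
  assumes L: "L \<in> Lie' n d" and d: "d \<ge> 3" and n: "n \<ge> 2"
    and z: "\<forall>r\<in>{2..n}. L r n = 0"
  shows "L = 0"
proof -
  have Lm: "\<forall>a b. (a \<notin> {1..n} \<or> b \<notin> {1..n}) \<longrightarrow> L a b = 0" using L by (simp add: Lie'_def mats_def)
  have rel: "(\<Sum>i=1..d. L ((d-1)*n+1 + a i - (\<Sum>k=1..d. a k)) (a i)) = 0"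
    if "\<forall>k\<in>{1..d}. a k \<in> {1..n}" for a using L that by (simp add: Lie'_def)
  obtain m where m: "d = m + 3" using d by (metis add.commute le_iff_add)
  have L1: "L 1 n = 0"
  proof -
    have "(\<Sum>i=1..d. L ((d-1)*n+1 + n - (\<Sum>k=1..d. n)) n) = 0" using rel[of "\<lambda>_. n"] n by simp
    moreover have "(d-1)*n+1 + n - (\<Sum>k=1..d. n) = 1" using m by (simp add: algebra_simps)
    ultimately have "of_nat d * L 1 n = 0" by simp
    then show ?thesis using d by simp
  qed
  have colN: "L r n = 0" for r
  proof (cases "r \<in> {1..n}")
    case True
    then show ?thesis using z L1 by (cases "r = 1") auto
  qed (use Lm in blast)
  have T: "L (2*n+1-y-z) x + L (2*n+1-x-z) y + L (2*n+1-x-y) z = 0"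
    if x: "x \<in> {1..n}" and y: "y \<in> {1..n}" and zz: "z \<in> {1..n}" for x y z
  proof -
    have rng: "\<forall>k\<in>{1..d}. tup x y z n k \<in> {1..n}" using x y zz n by (intro tup_range) auto
    have S: "(\<Sum>k=1..d. tup x y z n k) = x + y + z + (d-3)*n" by (rule tup_sum[OF d])
    define F where "F = (\<lambda>i. L ((d-1)*n+1 + tup x y z n i - (x + y + z + (d-3)*n)) (tup x y z n i))"
    have "(\<Sum>i=1..d. F i) = 0" using rel[OF rng] unfolding S F_def .
    moreover have "(\<Sum>i=4..d. F i) = 0" by (rule sum.neutral) (auto simp: F_def tup_def colN)
    ultimately have "F 1 + F 2 + F 3 = 0" using sum_split3[OF d, of F] by simp
    moreover have e: "(d-1)*n = (d-3)*n + 2*n" using m by (simp add: algebra_simps)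
    have "F 1 = L (2*n+1-y-z) x" using y zz e by (simp add: F_def tup_def)
    moreover have "F 2 = L (2*n+1-x-z) y" using x zz e by (simp add: F_def tup_def)
    moreover have "F 3 = L (2*n+1-x-y) z" using x y e by (simp add: F_def tup_def)
    ultimately show ?thesis by simp
  qed
  have A: "L (n+1-y) x + L (n+1-x) y = 0" if x: "x \<in> {1..n}" and y: "y \<in> {1..n}" for x y
  proof -
    have "L (2*n+1-y-n) x + L (2*n+1-x-n) y + L (2*n+1-x-y) n = 0" using T[OF x y, of n] n by simp
    moreover have "2*n+1-y-n = n+1-y" "2*n+1-x-n = n+1-x" by auto
    ultimately show ?thesis using colN by simp
  qed
  have Step: "L (r-1) (c-1) = L r c + L (r+n-1-c) (n-1)"
    if c: "2 \<le> c" "c \<le> n" and r: "2 \<le> r" "r \<le> n+1" for r c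
  proof -
    have i1: "c \<in> {1..n}" "n-1 \<in> {1..n}" "n+2-r \<in> {1..n}" using c r n by auto
    have f1: "L (2*n+1-(n-1)-(n+2-r)) c + L (2*n+1-c-(n+2-r)) (n-1) + L (2*n+1-c-(n-1)) (n+2-r) = 0"
      by (rule T[OF i1])
    have e1: "2*n+1-(n-1)-(n+2-r) = r" "2*n+1-c-(n+2-r) = r+n-1-c" "2*n+1-c-(n-1) = n+2-c"
      using c r n by auto
    have i2: "n+2-r \<in> {1..n}" "c-1 \<in> {1..n}" using c r n by auto
    have f2: "L (n+1-(c-1)) (n+2-r) + L (n+1-(n+2-r)) (c-1) = 0"
      by (rule A[OF i2])
    have e2: "n+1-(c-1) = n+2-c" "n+1-(n+2-r) = r-1" using c r by auto
    have g1: "L r c + L (r+n-1-c) (n-1) + L (n+2-c) (n+2-r) = 0" using f1 unfolding e1 .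
    have g2: "L (n+2-c) (n+2-r) + L (r-1) (c-1) = 0" using f2 unfolding e2 .
    from g1 g2 show ?thesis by (simp only: add_eq_0_iff minus_minus)
  qed
  have P: "k \<le> n-1 \<Longrightarrow> \<forall>r\<ge>1. L r (n-k) = of_nat k * L (r+k-1) (n-1)" for k
  proof (induction k)
    case 0
    then show ?case using colN by simp
  next
    case (Suc k)
    show ?case
    proof (intro allI impI)
      fix r :: nat assume r: "r \<ge> 1"
      show "L r (n - Suc k) = of_nat (Suc k) * L (r + Suc k - 1) (n-1)"
      proof (cases "r \<le> n")
        case True
        have "L (r+1-1) (n-k-1) = L (r+1) (n-k) + L (r+1+n-1-(n-k)) (n-1)"
          using Step[of "n-k" "r+1"] Suc.prems True r by simp
        moreover have "L (r+1) (n-k) = of_nat k * L (r+1+k-1) (n-1)" using Suc r by simp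
        moreover have "r+1+n-1-(n-k) = r + k" using Suc.prems by simp
        ultimately show ?thesis by (simp add: algebra_simps)
      next
        case False
        then show ?thesis using Lm by simp
      qed
    qed
  qed
  have H: "L m' (n-1) = 0" for m'
  proof (cases "m' \<in> {1..n}")
    case True
    have i3: "n-1 \<in> {1..n}" "n+1-m' \<in> {1..n}" using True n by auto
    have "L (n+1-(n+1-m')) (n-1) + L (n+1-(n-1)) (n+1-m') = 0" by (rule A[OF i3])
    moreover have "n+1-(n+1-m') = m'" "n+1-(n-1) = 2" using True n by auto
    ultimately have a1: "L m' (n-1) + L 2 (n+1-m') = 0" by simp
    have "m'-1 \<le> n-1" using True by auto
    from P[OF this]
    have "L 2 (n-(m'-1)) = of_nat (m'-1) * L (2+(m'-1)-1) (n-1)" by simp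
    moreover have "n-(m'-1) = n+1-m'" "2+(m'-1)-1 = m'" using True by auto
    ultimately have a2: "L 2 (n+1-m') = of_nat (m'-1) * L m' (n-1)" by simp
    have "m' = 1 + (m'-1)" using True by auto
    then have "(of_nat m' :: 'a) = 1 + of_nat (m'-1)" by (metis of_nat_1 of_nat_add)
    then have "of_nat m' * L m' (n-1) = (1 + of_nat (m'-1)) * L m' (n-1)" by simp
    also have "\<dots> = L m' (n-1) + L 2 (n+1-m')" using a2 by (simp add: algebra_simps)
    also have "\<dots> = 0" by (rule a1)
    finally show ?thesis using True by simp
  qed (use Lm in blast)
  show "L = 0"
  proof (rule ext, rule ext)
    fix r c
    show "L r c = 0 r c"
    proof (cases "r \<ge> 1 \<and> c \<in> {1..n}")
      case True
      have "n-c \<le> n-1" using True by auto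
      from P[OF this] True
      have "L r (n-(n-c)) = of_nat (n-c) * L (r+(n-c)-1) (n-1)" by simp
      moreover have "n-(n-c) = c" using True by auto
      ultimately show ?thesis using H by simp
    next
      case False
      then show ?thesis using Lm by auto
    qed
  qed
qed

definition Phi :: "nat \<Rightarrow> (nat \<Rightarrow> nat \<Rightarrow> 'a::field) \<Rightarrow> (nat \<Rightarrow> nat \<Rightarrow> 'a)" where
  "Phi n L = (\<lambda>i j. if j = n \<and> i \<in> {2..n} then L i j else 0)"

definition Em :: "nat \<Rightarrow> nat \<Rightarrow> (nat \<Rightarrow> nat \<Rightarrow> 'a::field)" where
  "Em n r = (\<lambda>i j. if i = r \<and> j = n then 1 else 0)"

lemma Phi_hom: "module_hom (mscale :: 'a::field \<Rightarrow> _) (mscale :: 'a \<Rightarrow> _) (Phi n)"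
  unfolding module_hom_iff
  using vs_mscale[where 'a='a] by (auto simp: module_iff_vector_space Phi_def mscale_def fun_eq_iff)

lemma Phi_span: "Phi n L = (\<Sum>r\<in>{2..n}. mscale (L r n) (Em n r))"
proof (rule ext, rule ext)
  fix i j
  have "(\<Sum>r\<in>{2..n}. mscale (L r n) (Em n r)) i j = (\<Sum>r\<in>{2..n}. if r = i then (if j = n then L i n else 0) else 0)"
    unfolding sum_fun_app mscale_def Em_def by (rule sum.cong) auto
  also have "\<dots> = Phi n L i j" by (simp add: sum.delta Phi_def)
  finally show "Phi n L i j = (\<Sum>r\<in>{2..n}. mscale (L r n) (Em n r)) i j" by simp
qed

lemma dim_Lie:
  assumes d: "d \<ge> 3" and n: "n \<ge> 2"
  shows "VS.dim (Lie n d :: (nat \<Rightarrow> nat \<Rightarrow> 'a::field_char_0) set) < n"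
proof -
  obtain B :: "(nat \<Rightarrow> nat \<Rightarrow> 'a) set" where B: "B \<subseteq> Lie n d" "VS.independent B" "Lie n d \<subseteq> VS.span B"
    "card B = VS.dim (Lie n d :: (nat \<Rightarrow> nat \<Rightarrow> 'a) set)"
    by (rule VS.basis_exists)
  have spB: "VS.span B \<subseteq> Lie' n d"
    using B(1) Lie_sub by (intro VS.span_minimal Lie'_subspace) blast
  have inj: "inj_on (Phi n) (VS.span B)"
  proof (rule inj_onI)
    fix x y assume x: "x \<in> VS.span B" and y: "y \<in> VS.span B" and eq: "Phi n x = Phi n y"
    have xy: "x - y \<in> Lie' n d" using spB x y by (intro VS.subspace_diff[OF Lie'_subspace]) auto
    have "\<forall>r\<in>{2..n}. (x - y) r n = 0"
    proof
      fix r :: nat assume r: "r \<in> {2..n}"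
      have "Phi n x r n = Phi n y r n" using eq by simp
      then show "(x - y) r n = 0" using r by (simp add: Phi_def)
    qed
    then have "x - y = 0" by (rule lie_kernel[OF xy d n])
    then show "x = y" by simp
  qed
  have indep: "VS.independent (Phi n ` B)"
    by (rule module_hom.independent_injective_image[OF Phi_hom B(2) inj])
  have sub: "Phi n ` B \<subseteq> VS.span (Em n ` {2..n})"
  proof
    fix y assume "y \<in> Phi n ` B"
    then obtain L where y: "y = Phi n L" by auto
    have "(\<Sum>r\<in>{2..n}. mscale (L r n) (Em n r)) \<in> VS.span (Em n ` {2..n} :: (nat \<Rightarrow> nat \<Rightarrow> 'a) set)"
      by (intro VS.span_sum VS.span_scale VS.span_base) auto
    then show "y \<in> VS.span (Em n ` {2..n})" using y Phi_span by metis
  qed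
  have "card (Phi n ` B) \<le> card (Em n ` {2..n} :: (nat \<Rightarrow> nat \<Rightarrow> 'a) set)"
    using VS.independent_span_bound[OF _ indep sub] by simp
  also have "\<dots> \<le> card {2..n}" by (rule card_image_le) simp
  also have "\<dots> < n" using n by simp
  finally have "card (Phi n ` B) < n" .
  moreover have "card (Phi n ` B) = card B"
    by (rule card_image, rule inj_on_subset[OF inj VS.span_superset])
  ultimately show ?thesis using B(4) by simp
qed

theorem lemma3p6:
  assumes "alg_closed TYPE('a::field_char_0)"
    and "d \<ge> 3" and "n \<ge> 2"
  shows "vector_space.dim (mscale :: 'a \<Rightarrow> _) (Lie n d :: (nat \<Rightarrow> nat \<Rightarrow> 'a) set)
           < vector_space.dim (mscale :: 'a \<Rightarrow> _) (Cent n d :: (nat \<Rightarrow> nat \<Rightarrow> 'a) set)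
       \<and> vector_space.dim (mscale :: 'a \<Rightarrow> _) (Cent n d :: (nat \<Rightarrow> nat \<Rightarrow> 'a) set) = n"
  using dim_Lie[OF assms(2,3), where 'a='a] dim_Cent[OF assms(2), of n, where 'a='a] assms(3) by simp

end
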